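(* An $A$-code $C$ of length $2$ satisfies $C=C^{\perp R}$ if and only if one of the following holds: (a) $C$ is of class I with $g_1=1$ and, when $\mathrm{char}\,\mathbb{F}\neq 2$, $g_2=0$; (b) $C$ is of class II with $g_2=1$; (c) $C$ is of class III with $g_1g_3=f$ in $\mathbb{F}[x]$ and, when $\mathrm{char}\,\mathbb{F}\neq2$, $g_2=0$.
   Context: Let $\mathbb{F}$ be a finite field, $f(x)\in\mathbb{F}[x]$ monic of degree $m$, $A=\mathbb{F}[x]/\langle f(x)\rangle$, elements identified with polynomials of degree $<m$. An $A$-code of length $l$ is an $A$-submodule of $A^l$; $C^\perp=\{a\in A^l:\sum_ia_ic_i=0\ \forall c\in C\}$ and $C^{\perp R}=\{(c_l,\ldots,c_1):(c_1,\ldots,c_l)\in C^\perp\}$. Every nonzero $A$-code has a unique canonical generator matrix (CGM): a matrix over $A$ whose rows generate $C$, whose rows are monic with strictly increasing leading indices (index of first nonzero entry), whose leading entries (first nonzero entries) divide $f$, such that $(f/L_i)\cdot(\text{row } i)$ is an $A$-combination of the later rows where $L_i$ is the leading entry of row $i$, and such that every entry lying above a leading entry has smaller degree than that leading entry. The nonzero codes of length 2 fall into three classes: class I, with CGM $(g_1\ g_2)$ where $0\ne g_1\mid f$ and $g_1\mid g_2$; class II, with CGM $(0\ g_2)$ where $g_2\mid f$; class III, with CGM $\begin{pmatrix}g_1&g_2\\0&g_3\end{pmatrix}$ where $g_1,g_3$ are nonzero monic divisors of $f$, $g_3$ divides $(f/g_1)g_2$, and $\deg g_2<\deg g_3$.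 *)

theory Defs
  imports "HOL-Computational_Algebra.Polynomial"
begin

text \<open>The ring A = F[x]/(f) is modelled by its canonical representatives:
  polynomials p with p mod f = p (i.e. degree < m = degree f, or p = 0).
  Operations of A are the polynomial operations followed by reduction mod f.\<close>

definition A_elem :: "'a::field poly \<Rightarrow> 'a poly \<Rightarrow> bool" where
  "A_elem f p \<longleftrightarrow> p mod f = p"

definition A_space2 :: "'a::field poly \<Rightarrow> ('a poly \<times> 'a poly) set" where
  "A_space2 f = {(a1, a2). A_elem f a1 \<and> A_elem f a2}"

definition is_A_code2 :: "'a::field poly \<Rightarrow> ('a poly \<times> 'a poly) set \<Rightarrow> bool" where
  "is_A_code2 f C \<longleftrightarrow>
     C \<subseteq> A_space2 f \<and> (0, 0) \<in> C \<and>
     (\<forall>u\<in>C. \<forall>v\<in>C. ((fst u + fst v) mod f, (snd u + snd v) mod f) \<in> C) \<and>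
     (\<forall>a. A_elem f a \<longrightarrow> (\<forall>u\<in>C. ((a * fst u) mod f, (a * snd u) mod f) \<in> C))"

definition dual2 :: "'a::field poly \<Rightarrow> ('a poly \<times> 'a poly) set \<Rightarrow> ('a poly \<times> 'a poly) set" where
  "dual2 f C = {(a1, a2) \<in> A_space2 f. \<forall>(c1, c2)\<in>C. (a1 * c1 + a2 * c2) mod f = 0}"

definition dualR2 :: "'a::field poly \<Rightarrow> ('a poly \<times> 'a poly) set \<Rightarrow> ('a poly \<times> 'a poly) set" where
  "dualR2 f C = {(c2, c1) | c1 c2. (c1, c2) \<in> dual2 f C}"

definition span_row :: "'a::field poly \<Rightarrow> 'a poly \<Rightarrow> 'a poly \<Rightarrow> ('a poly \<times> 'a poly) set" where
  "span_row f u1 u2 = {((a * u1) mod f, (a * u2) mod f) | a. A_elem f a}"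

definition span_rows2 :: "'a::field poly \<Rightarrow> 'a poly \<Rightarrow> 'a poly \<Rightarrow> 'a poly \<Rightarrow> ('a poly \<times> 'a poly) set" where
  "span_rows2 f g1 g2 g3 =
     {((a * g1) mod f, (a * g2 + b * g3) mod f) | a b. A_elem f a \<and> A_elem f b}"

definition monic_div :: "'a::field poly \<Rightarrow> 'a poly \<Rightarrow> bool" where
  "monic_div f g \<longleftrightarrow> A_elem f g \<and> g \<noteq> 0 \<and> lead_coeff g = 1 \<and> g dvd f"

definition class_I :: "'a::field poly \<Rightarrow> ('a poly \<times> 'a poly) set \<Rightarrow> 'a poly \<Rightarrow> 'a poly \<Rightarrow> bool" where
  "class_I f C g1 g2 \<longleftrightarrow> monic_div f g1 \<and> A_elem f g2 \<and> g1 dvd g2 \<and> C = span_row f g1 g2"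

definition class_II :: "'a::field poly \<Rightarrow> ('a poly \<times> 'a poly) set \<Rightarrow> 'a poly \<Rightarrow> bool" where
  "class_II f C g2 \<longleftrightarrow> monic_div f g2 \<and> C = span_row f 0 g2"

text \<open>C is of class III with canonical generator matrix ((g1 g2),(0 g3)).
  The condition deg g2 < deg g3 is read with deg 0 = -infinity.\<close>
definition class_III :: "'a::field poly \<Rightarrow> ('a poly \<times> 'a poly) set \<Rightarrow> 'a poly \<Rightarrow> 'a poly \<Rightarrow> 'a poly \<Rightarrow> bool" where
  "class_III f C g1 g2 g3 \<longleftrightarrow> monic_div f g1 \<and> monic_div f g3 \<and>
     g3 dvd (f div g1) * g2 \<and> (g2 = 0 \<or> degree g2 < degree g3) \<and>
     C = span_rows2 f g1 g2 g3"

end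

theory Submission
  imports Defs
begin

lemma Aelem_iff: "(f::'a::field poly) \<noteq> 0 \<Longrightarrow> A_elem f p \<longleftrightarrow> (p = 0 \<or> degree p < degree f)"
proof
  assume f: "f \<noteq> 0" and "A_elem f p"
  then have "p mod f = p" by (simp add: A_elem_def)
  then show "p = 0 \<or> degree p < degree f" using degree_mod_less[OF f, of p] by simp
next
  assume "p = 0 \<or> degree p < degree f"
  then show "A_elem f p" unfolding A_elem_def
  proof
    assume "degree p < degree f" then show "p mod f = p" by (rule mod_poly_less)
  qed simp
qed

lemma code_red: "is_A_code2 f C \<Longrightarrow> (u,v)\<in>C \<Longrightarrow> u mod f = u \<and> v mod f = v"
proof -
  assume "is_A_code2 f C" "(u,v)\<in>C"
  then have "(u,v) \<in> A_space2 f" unfolding is_A_code2_def by blast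
  then show ?thesis unfolding A_space2_def A_elem_def by simp
qed

lemma code_lin:
  assumes "is_A_code2 f C" "(u1,v1)\<in>C" "(u2,v2)\<in>C"
  shows "((a*u1 + b*u2) mod f, (a*v1 + b*v2) mod f) \<in> C"
proof -
  have hyp: "\<forall>a. A_elem f a \<longrightarrow> (\<forall>u\<in>C. ((a * fst u) mod f, (a * snd u) mod f) \<in> C)"
    using assms(1) unfolding is_A_code2_def by blast
  have sc: "((c*u) mod f, (c*v) mod f) \<in> C" if "(u,v)\<in>C" for c u v
  proof -
    have "A_elem f (c mod f)" unfolding A_elem_def by simp
    from hyp[rule_format, OF this that]
    have "((c mod f * u) mod f, (c mod f * v) mod f) \<in> C" unfolding fst_conv snd_conv .
    then show ?thesis unfolding mod_mult_left_eq .
  qed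
  have add: "\<forall>u\<in>C. \<forall>v\<in>C. ((fst u + fst v) mod f, (snd u + snd v) mod f) \<in> C"
    using assms(1) unfolding is_A_code2_def by blast
  from add[rule_format, OF sc[OF assms(2)] sc[OF assms(3)]]
  have "(((a*u1) mod f + (b*u2) mod f) mod f, ((a*v1) mod f + (b*v2) mod f) mod f) \<in> C"
    unfolding fst_conv snd_conv .
  then show ?thesis unfolding mod_add_eq .
qed

lemma dualR2_mem: "(x,y) \<in> dualR2 f C \<longleftrightarrow> A_elem f x \<and> A_elem f y \<and>
   (\<forall>c1 c2. (c1,c2)\<in>C \<longrightarrow> (y*c1 + x*c2) mod f = 0)"
  unfolding dualR2_def dual2_def A_space2_def by auto

lemma dualR2_anti: assumes "S \<subseteq> C" shows "dualR2 f C \<subseteq> dualR2 f S"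
proof
  fix z assume z: "z \<in> dualR2 f C"
  obtain x y where xy: "z = (x,y)" by (cases z)
  have "A_elem f x \<and> A_elem f y \<and> (\<forall>c1 c2. (c1,c2)\<in>C \<longrightarrow> (y*c1+x*c2) mod f = 0)"
    using z unfolding xy dualR2_mem .
  then have "A_elem f x \<and> A_elem f y \<and> (\<forall>c1 c2. (c1,c2)\<in>S \<longrightarrow> (y*c1+x*c2) mod f = 0)"
    using assms by blast
  then show "z \<in> dualR2 f S" unfolding xy dualR2_mem .
qed

lemma two_smult: "(x::'a::field poly) + x = smult 2 x"
proof -
  have "smult (1+1) x = x + x" by (simp only: smult_add_left smult_1_left)
  then show ?thesis by (simp only: one_add_one)
qed

lemma two_zero: "CHAR('a::field) = 2 \<Longrightarrow> (x::'a poly) + x = 0"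
proof -
  assume "CHAR('a) = 2"
  then have "(of_nat 2 :: 'a) = 0" by (simp only: of_nat_eq_0_iff_char_dvd dvd_refl)
  then have "(2::'a) = 0" by (simp only: of_nat_numeral)
  then show ?thesis by (simp only: two_smult smult_0_left)
qed

lemma two_nz: "CHAR('a::field) \<noteq> 2 \<Longrightarrow> (x::'a poly) + x = 0 \<Longrightarrow> x = 0"
proof -
  assume c: "CHAR('a) \<noteq> 2" and x: "x + x = 0"
  have "(of_nat 2 :: 'a) \<noteq> 0"
  proof
    assume "(of_nat 2 :: 'a) = 0"
    then have d: "CHAR('a) dvd 2" by (simp only: of_nat_eq_0_iff_char_dvd)
    have c1: "CHAR('a) \<noteq> Suc 0" by (rule CHAR_not_1)
    have c2: "CHAR('a) \<le> 2" using d by (rule dvd_imp_le) simp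
    have c0: "CHAR('a) \<noteq> 0"
    proof
      assume "CHAR('a) = 0" with d show False by simp
    qed
    from c c0 c1 c2 show False by linarith
  qed
  then have "(2::'a) \<noteq> 0" by (metis of_nat_numeral)
  moreover have "smult 2 x = 0" using x by (simp only: two_smult)
  ultimately show "x = 0" by (metis smult_eq_0_iff)
qed

lemma Sub:
  assumes "is_A_code2 f C" "(x1,y1)\<in>C" "(0,z)\<in>C" "x1 mod f = g1 mod f" "y1 mod f = g2 mod f"
    "z mod f = g3 mod f"
  shows "span_rows2 f g1 g2 g3 \<subseteq> C"
proof
  fix w assume "w \<in> span_rows2 f g1 g2 g3"
  then obtain a b where w: "w = ((a*g1) mod f, (a*g2 + b*g3) mod f)"
    unfolding span_rows2_def by blast
  have "((a*x1 + b*0) mod f, (a*y1 + b*z) mod f) \<in> C"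
    by (rule code_lin[OF assms(1-3)])
  moreover have "(a*x1 + b*0) mod f = (a*g1 + b*0) mod f"
    by (intro mod_add_cong mod_mult_cong refl assms(4))
  moreover have "(a*y1 + b*z) mod f = (a*g2+b*g3) mod f"
    by (intro mod_add_cong mod_mult_cong refl assms(5,6))
  ultimately show "w \<in> C" unfolding w by simp
qed

lemma span_I: "span_row f 1 r = span_rows2 f 1 r f"
proof
  show "span_row f 1 r \<subseteq> span_rows2 f 1 r f"
  proof
    fix w assume "w \<in> span_row f 1 r"
    then obtain a where a: "A_elem f a" "w = ((a*1) mod f, (a*r) mod f)"
      unfolding span_row_def by blast
    have "A_elem f 0" by (simp add: A_elem_def)
    moreover have "w = ((a*1) mod f, (a*r + 0*f) mod f)" using a by simp
    ultimately show "w \<in> span_rows2 f 1 r f" using a(1) unfolding span_rows2_def by blast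
  qed
  show "span_rows2 f 1 r f \<subseteq> span_row f 1 r"
  proof
    fix w assume "w \<in> span_rows2 f 1 r f"
    then obtain a b where a: "A_elem f a" "w = ((a*1) mod f, (a*r + b*f) mod f)"
      unfolding span_rows2_def by blast
    have "w = ((a*1) mod f, (a*r) mod f)" using a by simp
    then show "w \<in> span_row f 1 r" using a(1) unfolding span_row_def by blast
  qed
qed

lemma span_II: "span_row f 0 1 = span_rows2 f f 0 1"
proof
  have A0: "A_elem f 0" by (simp add: A_elem_def)
  show "span_row f 0 1 \<subseteq> span_rows2 f f 0 1"
  proof
    fix w assume "w \<in> span_row f 0 1"
    then obtain a where a: "A_elem f a" "w = ((a*0) mod f, (a*1) mod f)"
      unfolding span_row_def by blast
    have "w = ((0*f) mod f, (0*0 + a*1) mod f)" using a by simp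
    then show "w \<in> span_rows2 f f 0 1" using a(1) A0 unfolding span_rows2_def by blast
  qed
  show "span_rows2 f f 0 1 \<subseteq> span_row f 0 1"
  proof
    fix w assume "w \<in> span_rows2 f f 0 1"
    then obtain a b where a: "A_elem f b" "w = ((a*f) mod f, (a*0 + b*1) mod f)"
      unfolding span_rows2_def by blast
    have "w = ((b*0) mod f, (b*1) mod f)" using a by simp
    then show "w \<in> span_row f 0 1" using a(1) unfolding span_row_def by blast
  qed
qed

lemma G:
  fixes f g1 g2 g3 :: "'a::field poly"
  assumes f0: "degree f \<ge> 1" and fg: "g1 * g3 = f" and g2: "g2 + g2 = 0"
  shows "dualR2 f (span_rows2 f g1 g2 g3) = span_rows2 f g1 g2 g3"
proof
  define S where "S = span_rows2 f g1 g2 g3"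
  have fnz: "f \<noteq> 0" using f0 by auto
  have A1: "A_elem f 1" "A_elem f 0" using f0 by (auto simp: Aelem_iff[OF fnz])
  have g1nz: "g1 \<noteq> 0" and g3nz: "g3 \<noteq> 0" using fg fnz by auto
  show "span_rows2 f g1 g2 g3 \<subseteq> dualR2 f (span_rows2 f g1 g2 g3)"
  proof
    fix z assume "z \<in> span_rows2 f g1 g2 g3"
    then obtain a b where z: "z = ((a*g1) mod f, (a*g2 + b*g3) mod f)"
      unfolding span_rows2_def by blast
    show "z \<in> dualR2 f (span_rows2 f g1 g2 g3)"
      unfolding z dualR2_mem
    proof (intro conjI allI impI)
      show "A_elem f ((a*g1) mod f)" "A_elem f ((a*g2 + b*g3) mod f)" by (simp_all add: A_elem_def)
      fix c1 c2 assume "(c1,c2) \<in> span_rows2 f g1 g2 g3"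
      then obtain a' b' where c: "c1 = (a'*g1) mod f" "c2 = (a'*g2 + b'*g3) mod f"
        unfolding span_rows2_def by blast
      have "((a*g2 + b*g3) mod f * c1 + (a*g1) mod f * c2) mod f
          = ((a*g2+b*g3)*(a'*g1) + (a*g1)*(a'*g2+b'*g3)) mod f"
        unfolding c by (intro mod_add_cong mod_mult_cong mod_mod_trivial)
      also have "(a*g2+b*g3)*(a'*g1) + (a*g1)*(a'*g2+b'*g3) = (a*a'*g1)*(g2+g2) + (b*a'+a*b')*(g1*g3)"
        by (simp add: algebra_simps)
      also have "\<dots> = (b*a'+a*b')*f" using g2 fg by simp
      finally show "((a*g2 + b*g3) mod f * c1 + (a*g1) mod f * c2) mod f = 0" by simp
    qed
  qed
  show "dualR2 f (span_rows2 f g1 g2 g3) \<subseteq> span_rows2 f g1 g2 g3"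
  proof
    fix z assume z: "z \<in> dualR2 f (span_rows2 f g1 g2 g3)"
    obtain u v where zuv: "z = (u,v)" by (cases z)
    have Au: "A_elem f u" and Av: "A_elem f v"
      and H: "\<And>c1 c2. (c1,c2) \<in> span_rows2 f g1 g2 g3 \<Longrightarrow> (v*c1 + u*c2) mod f = 0"
      using z unfolding zuv dualR2_mem by blast+
    have "((0*g1) mod f, (0*g2 + 1*g3) mod f) \<in> span_rows2 f g1 g2 g3"
      unfolding span_rows2_def using A1 by blast
    from H[OF this] have "(u*(g3 mod f)) mod f = 0" by simp
    then have "(u*g3) mod f = 0" by (simp add: mod_mult_right_eq)
    then have "g1*g3 dvd u*g3" using fg by (simp add: mod_eq_0_iff_dvd)
    then have "g1 dvd u" using g3nz by simp
    then obtain a0 where a0: "u = g1*a0" by (elim dvdE)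
    have "((1*g1) mod f, (1*g2 + 0*g3) mod f) \<in> span_rows2 f g1 g2 g3"
      unfolding span_rows2_def using A1 by blast
    from H[OF this] have "(v*(g1 mod f) + u*(g2 mod f)) mod f = 0" by simp
    moreover have "(v*g1 + u*g2) mod f = (v*(g1 mod f) + u*(g2 mod f)) mod f"
      by (intro mod_add_cong mod_mult_cong refl mod_mod_trivial[symmetric])
    ultimately have "(v*g1 + u*g2) mod f = 0" by simp
    then have "g1*g3 dvd g1*(v + a0*g2)" using fg a0 by (simp add: mod_eq_0_iff_dvd algebra_simps)
    then have "g3 dvd v + a0*g2" using g1nz by simp
    then obtain b0 where b0: "v + a0*g2 = g3*b0" by (elim dvdE)
    have ng2: "- g2 = g2" using g2 by (simp only: neg_eq_iff_add_eq_0)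
    have "v = g3*b0 - a0*g2" using b0 by (simp only: eq_diff_eq)
    also have "\<dots> = g3*b0 + a0*(-g2)" by simp
    also have "\<dots> = a0*g2 + b0*g3" unfolding ng2 by (simp add: algebra_simps)
    finally have v: "v = a0*g2 + b0*g3" .
    have "u = u mod f" using Au unfolding A_elem_def by simp
    also have "\<dots> = ((a0 mod f)*g1) mod f" unfolding a0
      by (subst mult.commute) (intro mod_mult_cong refl mod_mod_trivial[symmetric])
    finally have "u = ((a0 mod f)*g1) mod f" .
    moreover have "v mod f = ((a0 mod f)*g2 + (b0 mod f)*g3) mod f" unfolding v
      by (intro mod_add_cong mod_mult_cong refl mod_mod_trivial[symmetric])
    then have "v = ((a0 mod f)*g2 + (b0 mod f)*g3) mod f" using Av unfolding A_elem_def by simp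
    moreover have "A_elem f (a0 mod f)" "A_elem f (b0 mod f)" by (simp_all add: A_elem_def)
    ultimately show "z \<in> span_rows2 f g1 g2 g3" unfolding zuv span_rows2_def by blast
  qed
qed


theorem mainTheorem6:
  fixes f :: "'a::{field,finite} poly" and C :: "('a poly \<times> 'a poly) set"
  assumes "lead_coeff f = 1" and "degree f \<ge> 1"
    and "is_A_code2 f C"
  shows "C = dualR2 f C \<longleftrightarrow>
     (\<exists>g2. class_I f C 1 g2 \<and> (CHAR('a) \<noteq> 2 \<longrightarrow> g2 = 0)) \<or>
     class_II f C 1 \<or>
     (\<exists>g1 g2 g3. class_III f C g1 g2 g3 \<and> g1 * g3 = f \<and> (CHAR('a) \<noteq> 2 \<longrightarrow> g2 = 0))"
proof -
  have fnz: "f \<noteq> 0" using assms(2) by auto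
  have A0: "A_elem f 0" by (simp add: A_elem_def)
  have A1: "A_elem f 1" using assms(2) by (simp add: Aelem_iff[OF fnz])
  have md1: "monic_div f 1" unfolding monic_div_def using A1 by simp
  have code: "is_A_code2 f C" by fact
  have bwd: "C = dualR2 f C" if "C = span_rows2 f g1 g2 g3" "g1*g3 = f" "g2+g2 = 0" for g1 g2 g3
  proof -
    have "dualR2 f (span_rows2 f g1 g2 g3) = span_rows2 f g1 g2 g3"
      by (rule G[OF assms(2) that(2,3)])
    then show ?thesis using that(1) by simp
  qed
  have g2z: "g2 + g2 = 0" if "CHAR('a) \<noteq> 2 \<longrightarrow> g2 = 0" for g2 :: "'a poly"
  proof (cases "CHAR('a) = 2")
    case True then show ?thesis by (rule two_zero)
  next
    case False then show ?thesis using that by simp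
  qed
  show ?thesis
  proof
    assume sd: "C = dualR2 f C"
    have memd: "(x,y) \<in> C \<longleftrightarrow> A_elem f x \<and> A_elem f y \<and>
       (\<forall>c1 c2. (c1,c2)\<in>C \<longrightarrow> (y*c1+x*c2) mod f = 0)" for x y
    proof -
      have "(x,y) \<in> dualR2 f C \<longleftrightarrow> A_elem f x \<and> A_elem f y \<and>
       (\<forall>c1 c2. (c1,c2)\<in>C \<longrightarrow> (y*c1+x*c2) mod f = 0)" by (rule dualR2_mem)
      then show ?thesis by (simp only: sd[symmetric])
    qed
    have anti: "C = S" if "S \<subseteq> C" "dualR2 f S = S" for S
    proof -
      have "dualR2 f C \<subseteq> dualR2 f S" by (rule dualR2_anti[OF that(1)])
      then have "C \<subseteq> S" by (simp only: sd[symmetric] that(2))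
      then show ?thesis using that(1) by (rule subset_antisym)
    qed
    show "(\<exists>g2. class_I f C 1 g2 \<and> (CHAR('a) \<noteq> 2 \<longrightarrow> g2 = 0)) \<or>
     class_II f C 1 \<or>
     (\<exists>g1 g2 g3. class_III f C g1 g2 g3 \<and> g1 * g3 = f \<and> (CHAR('a) \<noteq> 2 \<longrightarrow> g2 = 0))"
    proof (cases "\<forall>z\<in>C. fst z = 0")
      case True
      have z00: "(0,0) \<in> C" using code unfolding is_A_code2_def by blast
      have z01: "(0,1) \<in> C"
      proof (rule memd[THEN iffD2], intro conjI allI impI A0 A1)
        fix c1 c2 assume "(c1,c2)\<in>C"
        then have "c1 = 0" using True by fastforce
        then show "(1*c1 + 0*c2) mod f = 0" by simp
      qed
      have S: "span_rows2 f f 0 1 \<subseteq> C" by (rule Sub[OF code z00 z01]) simp_all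
      have "dualR2 f (span_rows2 f f 0 1) = span_rows2 f f 0 1" by (rule G[OF assms(2)]) simp_all
      then have "C = span_rows2 f f 0 1" using anti S by blast
      then have "class_II f C 1" unfolding class_II_def span_II using md1 by simp
      then show ?thesis by blast
    next
      case False
      then obtain u0 v0 where u0: "(u0,v0) \<in> C" "u0 \<noteq> 0" by auto
      define P where "P n \<longleftrightarrow> (\<exists>q v. (q,v)\<in>C \<and> q \<noteq> 0 \<and> degree q = n)" for n
      have "P (degree u0)" using u0 unfolding P_def by blast
      then have "P (LEAST n. P n)" by (rule LeastI)
      then obtain p vp where p: "(p,vp) \<in> C" "p \<noteq> 0" "degree p = (LEAST n. P n)"
        unfolding P_def by blast
      have minp: "degree p \<le> degree q" if "(q,v) \<in> C" "q \<noteq> 0" for q v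
      proof -
        have "P (degree q)" using that unfolding P_def by blast
        then show ?thesis unfolding p(3) by (rule Least_le)
      qed
      have pred: "p mod f = p" using code_red[OF code p(1)] by simp
      have degp: "degree p < degree f"
        using Aelem_iff[OF fnz, of p] pred p(2) by (simp add: A_elem_def)
      have red_small: "x mod f = x" if "degree x < degree p" for x
        using that degp by (intro mod_poly_less) simp
      have red_mod: "(x mod p) mod f = x mod p" for x
      proof (cases "x mod p = 0")
        case True then show ?thesis by simp
      next
        case False show ?thesis by (rule red_small[OF degree_mod_less'[OF p(2) False]])
      qed
      have claim1: "p dvd u" if uw: "(u,w) \<in> C" for u w
      proof -
        have "((1*u + (-(u div p))*p) mod f, (1*w + (-(u div p))*vp) mod f) \<in> C"
          by (rule code_lin[OF code uw p(1)])
        moreover have "1*u + (-(u div p))*p = u mod p"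
        proof -
          have "1*u + (-(u div p))*p = u - u div p * p" by simp
          also have "\<dots> = u mod p" by (rule minus_div_mult_eq_mod)
          finally show ?thesis .
        qed
        ultimately have um: "(u mod p, (1*w + (-(u div p))*vp) mod f) \<in> C" using red_mod by simp
        show "p dvd u"
        proof (rule ccontr)
          assume "\<not> p dvd u" then have nz: "u mod p \<noteq> 0" by (simp add: mod_eq_0_iff_dvd)
          then have "degree (u mod p) < degree p" by (rule degree_mod_less'[OF p(2)])
          with minp[OF um nz] show False by simp
        qed
      qed
      have pdf: "p dvd f"
      proof -
        have "(((-(f div p))*p + 0*p) mod f, ((-(f div p))*vp + 0*vp) mod f) \<in> C"
          by (rule code_lin[OF code p(1) p(1)])
        then have d: "p dvd ((-(f div p))*p + 0*p) mod f" by (rule claim1)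
        have "((-(f div p))*p + 0*p) mod f = (f + (-(f div p))*p) mod f" by simp
        also have "f + (-(f div p))*p = f - f div p * p" by simp
        also have "\<dots> = f mod p" by (rule minus_div_mult_eq_mod)
        also have "(f mod p) mod f = f mod p" by (rule red_mod)
        finally have "p dvd f mod p" using d by simp
        show "p dvd f"
        proof (rule ccontr)
          assume "\<not> p dvd f" then have nz: "f mod p \<noteq> 0" by (simp add: mod_eq_0_iff_dvd)
          then have "degree (f mod p) < degree p" by (rule degree_mod_less'[OF p(2)])
          moreover have "degree p \<le> degree (f mod p)" by (rule dvd_imp_degree_le[OF \<open>p dvd f mod p\<close> nz])
          ultimately show False by simp
        qed
      qed
      define c where "c = inverse (lead_coeff p)"
      have c0: "c \<noteq> 0" using p(2) by (simp add: c_def)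
      define g1 where "g1 = smult c p"
      have g1lc: "lead_coeff g1 = 1" using p(2) by (simp add: g1_def c_def)
      have g1deg: "degree g1 = degree p" using c0 by (simp add: g1_def)
      have g1nz: "g1 \<noteq> 0" using c0 p(2) by (simp add: g1_def)
      have g1dvd: "g1 dvd u" if "(u,w)\<in>C" for u w
        using smult_dvd[OF claim1[OF that] c0] unfolding g1_def .
      have g1f: "g1 dvd f" using smult_dvd[OF pdf c0] unfolding g1_def .
      have g1red: "g1 mod f = g1" using g1deg degp by (simp add: mod_poly_less)
      define h where "h = ([:c:]*vp + 0*vp) mod f"
      have "(([:c:]*p + 0*p) mod f, h) \<in> C" unfolding h_def by (rule code_lin[OF code p(1) p(1)])
      moreover have "([:c:]*p + 0*p) mod f = g1" using g1red by (simp add: g1_def)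
      ultimately have g1h: "(g1, h) \<in> C" by simp
      define g3 where "g3 = f div g1"
      have fg: "g1 * g3 = f" unfolding g3_def using g1f by simp
      have g3nz: "g3 \<noteq> 0" using fg fnz by auto
      have g3f: "g3 dvd f" unfolding fg[symmetric] by simp
      have g3deg: "degree g3 \<le> degree f" by (rule dvd_imp_degree_le[OF g3f fnz])
      have g3lc: "lead_coeff g3 = 1" using lead_coeff_mult[of g1 g3] fg g1lc assms(1) by simp
      have z3: "(0, g3 mod f) \<in> C"
      proof (rule memd[THEN iffD2], intro conjI allI impI A0)
        show "A_elem f (g3 mod f)" by (simp add: A_elem_def)
        fix c1 c2 assume "(c1,c2)\<in>C"
        from g1dvd[OF this] obtain k where k: "c1 = g1*k" by (elim dvdE)
        have "((g3 mod f)*c1 + 0*c2) mod f = (g3*c1) mod f" by (simp add: mod_mult_left_eq)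
        also have "g3*c1 = f*k" unfolding k fg[symmetric] by (simp add: algebra_simps)
        finally show "((g3 mod f)*c1 + 0*c2) mod f = 0" by simp
      qed
      define q where "q = h div g3"
      define r where "r = h mod g3"
      have rdeg: "r = 0 \<or> degree r < degree g3" unfolding r_def using degree_mod_less[OF g3nz] .
      have rred: "r mod f = r"
      proof (cases "r = 0")
        case False
        then have "degree r < degree f" using rdeg g3deg by simp
        then show ?thesis by (rule mod_poly_less)
      qed simp
      have "((1*g1 + (-q)*0) mod f, (1*h + (-q)*(g3 mod f)) mod f) \<in> C"
        by (rule code_lin[OF code g1h z3])
      moreover have "(1*g1 + (-q)*0) mod f = g1" using g1red by simp
      moreover have "(1*h + (-q)*(g3 mod f)) mod f = r"
      proof -
        have "(1*h + (-q)*(g3 mod f)) mod f = (h + (-q)*g3) mod f"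
          by (intro mod_add_cong mod_mult_cong refl mod_mod_trivial) simp
        also have "h + (-q)*g3 = h - h div g3 * g3" unfolding q_def by simp
        also have "\<dots> = r" unfolding r_def by (rule minus_div_mult_eq_mod)
        finally show ?thesis using rred by simp
      qed
      ultimately have g1r: "(g1, r) \<in> C" by simp
      have rr: "r + r = 0"
      proof (rule ccontr)
        assume nz: "r + r \<noteq> 0"
        from memd[THEN iffD1, OF g1r] have "\<forall>c1 c2. (c1,c2)\<in>C \<longrightarrow> (r*c1 + g1*c2) mod f = 0"
          by blast
        then have "(r*g1 + g1*r) mod f = 0" using g1r by blast
        moreover have "r*g1 + g1*r = g1*(r+r)" by (simp add: algebra_simps)
        ultimately have "g1*g3 dvd g1*(r+r)" using fg by (simp add: mod_eq_0_iff_dvd)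
        then have "g3 dvd r + r" using g1nz by simp
        then have "degree g3 \<le> degree (r + r)" by (rule dvd_imp_degree_le[OF _ nz])
        moreover have "degree (r + r) \<le> degree r" using degree_add_le_max[of r r] by simp
        moreover have "r \<noteq> 0" using nz by auto
        ultimately show False using rdeg by simp
      qed
      define S where "S = span_rows2 f g1 r g3"
      have "S \<subseteq> C" unfolding S_def by (rule Sub[OF code g1r z3]) simp_all
      moreover have "dualR2 f S = S" unfolding S_def by (rule G[OF assms(2) fg rr])
      ultimately have CS: "C = S" by (rule anti)
      have r0: "CHAR('a) \<noteq> 2 \<longrightarrow> r = 0" using two_nz rr by blast
      have Ar: "A_elem f r" using rred by (simp add: A_elem_def)
      show ?thesis
      proof (cases "g1 = 1")
        case True
        then have "g3 = f" using fg by simp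
        have "C = span_row f 1 r" unfolding span_I CS S_def True \<open>g3 = f\<close> ..
        then have "class_I f C 1 r" unfolding class_I_def using md1 Ar by simp
        then show ?thesis using r0 by blast
      next
        case False
        have "degree g1 \<noteq> 0"
        proof
          assume "degree g1 = 0"
          then have "[: coeff g1 0 :] = g1" by (rule degree_0_id)
          moreover have "coeff g1 0 = 1" using g1lc \<open>degree g1 = 0\<close> by simp
          ultimately show False using False one_pCons by metis
        qed
        moreover have "degree f = degree g1 + degree g3"
          using degree_mult_eq[OF g1nz g3nz] fg by simp
        ultimately have "degree g3 < degree f" by simp
        then have g3red: "g3 mod f = g3" by (rule mod_poly_less)
        have "monic_div f g1" unfolding monic_div_def A_elem_def using g1red g1nz g1lc g1f by simp
        moreover have "monic_div f g3" unfolding monic_div_def A_elem_def using g3red g3nz g3lc g3f by simp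
        moreover have "g3 dvd (f div g1) * r" by (simp add: g3_def)
        ultimately have "class_III f C g1 r g3" unfolding class_III_def using CS S_def rdeg by simp
        then show ?thesis using fg r0 by blast
      qed
    qed
  next
    assume H: "(\<exists>g2. class_I f C 1 g2 \<and> (CHAR('a) \<noteq> 2 \<longrightarrow> g2 = 0)) \<or>
     class_II f C 1 \<or>
     (\<exists>g1 g2 g3. class_III f C g1 g2 g3 \<and> g1 * g3 = f \<and> (CHAR('a) \<noteq> 2 \<longrightarrow> g2 = 0))"
    show "C = dualR2 f C"
    proof (cases "class_II f C 1")
      case True
      then have "C = span_rows2 f f 0 1" unfolding class_II_def span_II by simp
      then show ?thesis by (rule bwd) simp_all
    next
      case nII: False
      show ?thesis
      proof (cases "\<exists>g2. class_I f C 1 g2 \<and> (CHAR('a) \<noteq> 2 \<longrightarrow> g2 = 0)")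
        case True
        then obtain g2 where "class_I f C 1 g2" "CHAR('a) \<noteq> 2 \<longrightarrow> g2 = 0" by blast
        moreover from this have "C = span_rows2 f 1 g2 f" unfolding class_I_def span_I by simp
        ultimately show ?thesis using bwd[of 1 g2 f] g2z by simp
      next
        case False
        with H nII obtain g1 g2 g3 where "class_III f C g1 g2 g3" "g1 * g3 = f"
          "CHAR('a) \<noteq> 2 \<longrightarrow> g2 = 0" by blast
        moreover from this have "C = span_rows2 f g1 g2 g3" unfolding class_III_def by simp
        ultimately show ?thesis using bwd[of g1 g2 g3] g2z by simp
      qed
    qed
  qed
qed

end
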